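(* Let $m,p\in\mathbb N$ and $\omega>0$. Let $A,B\in\mathbb R^{m\times m}$ be constant matrices, let $f:\mathbb R\times\mathbb R^m\to\mathbb R^m$ and $h:\mathbb R^m\to\mathbb R^m$ be continuous, with $f(t+\omega,x)=f(t,x)$ for all $t\in\mathbb R$, $x\in\mathbb R^m$. Let $\{\theta_k\}_{k\in\mathbb Z}$ be a strictly increasing sequence of reals with $\theta_{k+p}=\theta_k+\omega$ for all $k\in\mathbb Z$. Let $\{\sigma_k\}_{k\in\mathbb Z}$ be a sequence in $\mathbb R^m$ with $\sup_k\|\sigma_k\|\le M_\sigma$ for some $M_\sigma>0$, and define $g:\mathbb R\to\mathbb R^m$ by $g(t)=\sigma_k$ for $t\in(\theta_{kp},\theta_{(k+1)p}]$, $k\in\mathbb Z$. Consider the impulsive system $$\frac{dx}{dt}=Ax+f(t,x)+g(t),\ t\neq\theta_k,\qquad \Delta x|_{t=\theta_k}=Bx(\theta_k)+h(x(\theta_k)),$$ where $\Delta x|_{t=\theta_k}=x(\theta_k+)-x(\theta_k)$. Assume: (A1) $AB=BA$ and $\det(I+B)\neq0$; (A2) all eigenvalues of $A+\frac{p}{\omega}\log(I+B)$ have negative real parts; (A3) there are $M_f,M_h>0$ with $\sup_{t,x}\|f(t,x)\|\le M_f$ and $\sup_x\|h(x)\|\le M_h$; (A4) there are $L_f,L_h>0$ with $\|f(t,x_1)-f(t,x_2)\|\le L_f\|x_1-x_2\|$ for all $t,x_1,x_2$ and $\|h(x_1)-h(x_2)\|\le L_h\|x_1-x_2\|$ for all $x_1,x_2$;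 and let $N,\lambda>0$ be constants such that the matriciant $U(t,s)=e^{A(t-s)}(I+B)^{i([s,t))}$ ($t>s$), $U(s,s)=I$, of the linear system $x'=Ax$, $\Delta x|_{t=\theta_k}=Bx(\theta_k)$ satisfies $\|U(t,s)\|\le Ne^{-\lambda(t-s)}$ for all $t\ge s$, and assume moreover (A5) $N\left(\frac{L_f}{\lambda}+\frac{pL_h}{1-e^{-\lambda\omega}}\right)<1$; (A6) $NL_f+\frac{p}{\omega}\ln(1+NL_h)<\lambda$. Suppose there is a sequence $\{\zeta_n\}_{n\in\mathbb N}$ of positive integers diverging to infinity such that $\|\sigma_{k+\zeta_n}-\sigma_k\|\to0$ as $n\to\infty$ for each $k$ in bounded intervals of integers. Then the unique solution $\phi(t)$ of the system that is bounded on $\mathbb R$ satisfies $\|\phi(t+\omega\zeta_n)-\phi(t)\|\to0$ as $n\to\infty$ uniformly on compact subsets of $\mathbb R$.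
   Context: Norms are the Euclidean norm on vectors and the spectral norm on matrices. $i(J)$ denotes the number of terms of $\{\theta_k\}$ lying in the interval $J$. Solutions of the impulsive system are piecewise continuous functions, continuous except possibly at the $\theta_k$, left continuous at each $\theta_k$ with right limits $x(\theta_k+)$, satisfying the differential equation between impulse moments and the jump condition at each $\theta_k$. Under (A1)–(A5) the system has a unique solution $\phi$ bounded on the whole real line; it satisfies $\phi(t)=\int_{-\infty}^tU(t,s)[f(s,\phi(s))+g(s)]ds+\sum_{\theta_k<t}U(t,\theta_k+)h(\phi(\theta_k))$. *)

theory Defs
  imports "HOL-Analysis.Analysis"
begin

definition matpow :: "'a::semiring_1 ^'n^'n \<Rightarrow> nat \<Rightarrow> 'a^'n^'n" where
  "matpow M k = (((**) M) ^^ k) (mat 1)"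

definition mexp :: "'a::{real_normed_field,banach} ^'n^'n \<Rightarrow> 'a^'n^'n" where
  "mexp M = (\<Sum>k. (1 / fact k) *\<^sub>R matpow M k)"

definition cmat :: "real^'n^'n \<Rightarrow> complex^'n^'n" where
  "cmat M = (\<chi> i j. complex_of_real (M $ i $ j))"

definition is_eigenvalue :: "complex^'n^'n \<Rightarrow> complex \<Rightarrow> bool" where
  "is_eigenvalue M \<mu> \<longleftrightarrow> (\<exists>v. v \<noteq> 0 \<and> M *v v = \<mu> *s v)"

definition mnorm :: "real^'n^'n \<Rightarrow> real" where
  "mnorm M = onorm (\<lambda>x. M *v x)"

definition num_in :: "(int \<Rightarrow> real) \<Rightarrow> real set \<Rightarrow> nat" where
  "num_in \<theta> J = card {k. \<theta> k \<in> J}"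

definition matriciant :: "real^'n^'n \<Rightarrow> real^'n^'n \<Rightarrow> (int \<Rightarrow> real) \<Rightarrow> real \<Rightarrow> real \<Rightarrow> real^'n^'n" where
  "matriciant A B \<theta> t s =
     (if t = s then mat 1 else mexp ((t - s) *\<^sub>R A) ** matpow (mat 1 + B) (num_in \<theta> {s..<t}))"

definition impulsive_solution ::
  "real^'n^'n \<Rightarrow> real^'n^'n \<Rightarrow> (real \<Rightarrow> real^'n \<Rightarrow> real^'n) \<Rightarrow> (real \<Rightarrow> real^'n)
   \<Rightarrow> (real^'n \<Rightarrow> real^'n) \<Rightarrow> (int \<Rightarrow> real) \<Rightarrow> (real \<Rightarrow> real^'n) \<Rightarrow> bool" where
  "impulsive_solution A B f g h \<theta> x \<longleftrightarrow>
     (\<forall>t. t \<notin> range \<theta> \<longrightarrow> (x has_vector_derivative (A *v x t + f t (x t) + g t)) (at t)) \<and>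
     (\<forall>k. continuous (at_left (\<theta> k)) x \<and>
          (x \<longlongrightarrow> x (\<theta> k) + B *v x (\<theta> k) + h (x (\<theta> k))) (at_right (\<theta> k)))"

end

theory Submission
  imports Defs
begin

typedef (overloaded) ('n::finite) sqm = "UNIV :: (real^'n^'n) set"
  morphisms mrep mabs by auto

setup_lifting type_definition_sqm

instantiation sqm :: (finite) real_normed_vector
begin
lift_definition norm_sqm :: "'a sqm \<Rightarrow> real" is "\<lambda>M. onorm ((*v) M)" .
lift_definition minus_sqm :: "'a sqm \<Rightarrow> 'a sqm \<Rightarrow> 'a sqm" is "(-)" .
lift_definition plus_sqm :: "'a sqm \<Rightarrow> 'a sqm \<Rightarrow> 'a sqm" is "(+)" .
lift_definition uminus_sqm :: "'a sqm \<Rightarrow> 'a sqm" is "uminus" .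
lift_definition zero_sqm :: "'a sqm" is "0" .
lift_definition scaleR_sqm :: "real \<Rightarrow> 'a sqm \<Rightarrow> 'a sqm" is "scaleR" .
definition dist_sqm :: "'a sqm \<Rightarrow> 'a sqm \<Rightarrow> real"
  where "dist_sqm a b = norm (a - b)"
definition uniformity_sqm :: "('a sqm \<times> 'a sqm) filter" where
  "uniformity_sqm = (INF e\<in>{0 <..}. principal {(x, y). dist x y < e})"
definition open_sqm :: "'a sqm set \<Rightarrow> bool"
  where "open_sqm S = (\<forall>x\<in>S. \<forall>\<^sub>F (x', y) in uniformity. x' = x \<longrightarrow> y \<in> S)"
definition sgn_sqm :: "'a sqm \<Rightarrow> 'a sqm"
  where "sgn_sqm x = scaleR (inverse (norm x)) x"
instance
proof
  fix x y z :: "'a sqm" and a b :: real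
  show "x + y + z = x + (y + z)" by transfer (simp add: algebra_simps)
  show "x + y = y + x" by transfer (simp add: algebra_simps)
  show "0 + x = x" by transfer simp
  show "- x + x = 0" by transfer simp
  show "x - y = x + - y" by transfer simp
  show "a *\<^sub>R (x + y) = a *\<^sub>R x + a *\<^sub>R y" by transfer (simp add: scaleR_right_distrib)
  show "(a + b) *\<^sub>R x = a *\<^sub>R x + b *\<^sub>R x" by transfer (simp add: scaleR_left_distrib)
  show "a *\<^sub>R b *\<^sub>R x = (a * b) *\<^sub>R x" by transfer simp
  show "1 *\<^sub>R x = x" by transfer simp
  show "dist x y = norm (x - y)" by (simp add: dist_sqm_def)
  show "sgn x = inverse (norm x) *\<^sub>R x" by (simp add: sgn_sqm_def)
  show "(uniformity :: ('a sqm \<times> 'a sqm) filter) = (INF e\<in>{0 <..}. principal {(x, y). dist x y < e})"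
    by (simp add: uniformity_sqm_def)
  show "open U = (\<forall>x\<in>U. \<forall>\<^sub>F (x', y) in uniformity. x' = x \<longrightarrow> y \<in> U)" for U :: "'a sqm set"
    by (simp add: open_sqm_def)
  show "(norm x = 0) = (x = 0)"
    apply transfer
    apply (simp add: onorm_eq_0)
    by (metis matrix_vector_mul_lid matrix_vector_mult_0 matrix_eq)
  show "norm (x + y) \<le> norm x + norm y"
    apply transfer
    subgoal for x y
    proof -
      have "(*v) (x+y) = (\<lambda>v. x *v v + y *v v)" by (simp add: matrix_vector_mult_add_rdistrib fun_eq_iff)
      then show ?thesis by (simp add: onorm_triangle)
    qed
    done
  show "norm (a *\<^sub>R x) = \<bar>a\<bar> * norm x"
    apply transfer
    by (metis (no_types, lifting) ext matrix_vector_mul_bounded_linear onorm_scaleR scaleR_matrix_vector_assoc)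
qed
end


instantiation sqm :: (finite) ring_1
begin
lift_definition one_sqm :: "'a sqm" is "mat 1" .
lift_definition times_sqm :: "'a sqm \<Rightarrow> 'a sqm \<Rightarrow> 'a sqm" is "(**)" .
instance
proof
  fix x y z :: "'a sqm"
  show "x * y * z = x * (y * z)" by transfer (simp add: matrix_mul_assoc)
  show "1 * x = x" by transfer simp
  show "x * 1 = x" by transfer simp
  show "(x + y) * z = x * z + y * z" by transfer (simp add: matrix_matrix_mult_def vec_eq_iff sum.distrib distrib_right)
  show "x * (y + z) = x * y + x * z" by transfer (simp add: matrix_add_ldistrib)
  show "(0::'a sqm) \<noteq> 1"
    apply transfer
  proof -
    have "(mat 1::real^'a^'a) $ undefined $ undefined = 1" by (simp add: mat_def)
    then show "0 \<noteq> (mat 1 :: real^'a^'a)" by auto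
  qed
qed
end

lemma mvec_lin: "(*v) (M ** N) = (\<lambda>v. M *v v) o (\<lambda>v. N *v v)" for M N :: "real^'n^'n"
  by (simp add: fun_eq_iff matrix_vector_mul_assoc)

instance sqm :: (finite) real_normed_algebra_1
proof
  fix x y :: "'a sqm" and a :: real
  show "a *\<^sub>R x * y = a *\<^sub>R (x * y)" by transfer (simp add: scalar_matrix_assoc)
  show "x * a *\<^sub>R y = a *\<^sub>R (x * y)" by transfer (simp add: matrix_scalar_ac scalar_matrix_assoc)
  show "norm (x * y) \<le> norm x * norm y"
    apply transfer
    unfolding mvec_lin by (rule onorm_compose) auto
  show "norm (1::'a sqm) = 1"
    apply transfer
  proof -
    have "(*v) (mat 1) = (\<lambda>x::real^'a. x)" by (simp add: fun_eq_iff)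
    then show "onorm ((*v) (mat 1::real^'a^'a)) = 1" using onorm_id by simp
  qed
qed


lemma norm_sqm_eq: "norm x = onorm ((*v) (mrep x))"
  by (simp add: norm_sqm.rep_eq)

lemma mat_norm_le_sum: "norm (M::real^'n^'n) \<le> (\<Sum>i\<in>UNIV. \<Sum>j\<in>UNIV. \<bar>M $ i $ j\<bar>)"
proof -
  have "norm M = L2_set (\<lambda>i. norm (M $ i)) UNIV" by (simp add: norm_vec_def)
  also have "\<dots> \<le> (\<Sum>i\<in>UNIV. norm (M $ i))" by (rule L2_set_le_sum) auto
  also have "\<dots> \<le> (\<Sum>i\<in>UNIV. \<Sum>j\<in>UNIV. \<bar>M $ i $ j\<bar>)"
    by (rule sum_mono) (rule norm_le_l1_cart)
  finally show ?thesis .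
qed

lemma entry_le: "\<bar>M $ i $ j\<bar> \<le> norm (M::real^'n^'m)"
proof -
  have "\<bar>M $ i $ j\<bar> \<le> norm (M $ i)" by (rule component_le_norm_cart)
  also have "\<dots> \<le> norm M" by (rule Finite_Cartesian_Product.norm_nth_le)
  finally show ?thesis .
qed

lemma bl_rep: "bounded_linear (mrep :: 'n::finite sqm \<Rightarrow> _)"
proof (rule bounded_linear_intro[where K="real CARD('n) * real CARD('n)"])
  fix x y :: "'n sqm" and r :: real
  show "mrep (x + y) = mrep x + mrep y" by (simp add: plus_sqm.rep_eq)
  show "mrep (r *\<^sub>R x) = r *\<^sub>R mrep x" by (simp add: scaleR_sqm.rep_eq)
  have "norm (mrep x) \<le> (\<Sum>i\<in>(UNIV::'n set). \<Sum>j\<in>(UNIV::'n set). \<bar>mrep x $ i $ j\<bar>)" by (rule mat_norm_le_sum)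
  also have "\<dots> \<le> (\<Sum>i\<in>(UNIV::'n set). \<Sum>j\<in>(UNIV::'n set). norm x)"
    by (intro sum_mono) (simp add: norm_sqm_eq matrix_component_le_onorm)
  finally show "norm (mrep x) \<le> norm x * (real CARD('n) * real CARD('n))" by (simp add: algebra_simps)
qed

lemma bl_abs: "bounded_linear (mabs :: _ \<Rightarrow> 'n::finite sqm)"
proof (rule bounded_linear_intro[where K="real CARD('n) * real CARD('n)"])
  fix x y :: "real^'n^'n" and r :: real
  show "mabs (x + y) = (mabs x + mabs y :: 'n sqm)" by (simp add: plus_sqm.abs_eq)
  show "mabs (r *\<^sub>R x) = (r *\<^sub>R mabs x :: 'n sqm)" by (simp add: scaleR_sqm.abs_eq)
  have "norm (mabs x :: 'n sqm) \<le> (\<Sum>i\<in>(UNIV::'n set). \<Sum>j\<in>(UNIV::'n set). \<bar>x $ i $ j\<bar>)"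
    by (simp add: norm_sqm_eq mabs_inverse onorm_le_matrix_component_sum)
  also have "\<dots> \<le> (\<Sum>i\<in>(UNIV::'n set). \<Sum>j\<in>(UNIV::'n set). norm x)"
    by (intro sum_mono) (rule entry_le)
  finally show "norm (mabs x :: 'n sqm) \<le> norm x * (real CARD('n) * real CARD('n))" by (simp add: algebra_simps)
qed

instance sqm :: (finite) banach
proof
  fix X :: "nat \<Rightarrow> 'a sqm"
  assume "Cauchy X"
  then have "Cauchy (\<lambda>n. mrep (X n))" by (rule bounded_linear.Cauchy[OF bl_rep])
  then obtain L where "(\<lambda>n. mrep (X n)) \<longlonglongrightarrow> L" using Cauchy_convergent_iff convergent_def by blast
  then have "(\<lambda>n. mabs (mrep (X n)) :: 'a sqm) \<longlonglongrightarrow> mabs L" by (rule bounded_linear.tendsto[OF bl_abs])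
  then show "convergent X" by (simp add: mrep_inverse convergent_def) blast
qed

lemma rep_pow: "mrep (mabs M ^ k) = matpow M k"
  by (induction k) (simp_all add: matpow_def one_sqm.rep_eq times_sqm.rep_eq mabs_inverse)

lemma mexp_rep: "mexp M = mrep (exp (mabs M))"
proof -
  have "mrep (exp (mabs M)) = (\<Sum>n. mrep (mabs M ^ n /\<^sub>R fact n))"
    unfolding exp_def by (rule bounded_linear.suminf[OF bl_rep summable_exp_generic])
  also have "\<dots> = mexp M"
    by (simp add: mexp_def rep_pow scaleR_sqm.rep_eq inverse_eq_divide)
  finally show ?thesis by simp
qed

lemma mexp_zero: "mexp (0::real^'n^'n) = mat 1"
  by (simp add: mexp_rep zero_sqm.abs_eq[symmetric] one_sqm.rep_eq)

lemma mexp_deriv: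
  fixes A :: "real^'n^'n"
  shows "((\<lambda>s. mexp ((t - s) *\<^sub>R A)) has_vector_derivative - (mexp ((t - s) *\<^sub>R A) ** A)) (at s within S)"
proof -
  have d1: "((\<lambda>s. t - s) has_vector_derivative (-1)) (at s within S)"
    by (auto intro!: derivative_eq_intros simp: has_vector_derivative_def)
  have d2: "((\<lambda>u. exp (u *\<^sub>R mabs A :: 'n sqm)) has_vector_derivative exp ((t - s) *\<^sub>R mabs A) * mabs A) (at (t - s))"
    by (rule exp_scaleR_has_vector_derivative_right)
  have "((\<lambda>s. exp ((t - s) *\<^sub>R mabs A :: 'n sqm)) has_vector_derivative (-1) *\<^sub>R (exp ((t - s) *\<^sub>R mabs A) * mabs A)) (at s within S)"
    using vector_diff_chain_within[OF d1, of "\<lambda>u. exp (u *\<^sub>R mabs A :: 'n sqm)"] d2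
    by (simp add: o_def has_vector_derivative_at_within)
  from bounded_linear.has_vector_derivative[OF bl_rep this]
  show ?thesis
    by (simp add: mexp_rep scaleR_sqm.abs_eq[symmetric] times_sqm.rep_eq mabs_inverse uminus_sqm.rep_eq scaleR_sqm.rep_eq)
qed

lemma piece_mono:
  fixes r :: "real \<Rightarrow> real"
  assumes xy: "x < y"
    and D: "\<And>s. x < s \<Longrightarrow> s < y \<Longrightarrow> \<exists>d. (r has_real_derivative d) (at s) \<and> d \<le> 0"
    and LC: "continuous (at_left y) r"
    and RL: "(r \<longlongrightarrow> L) (at_right x)" and L: "L \<le> r x"
  shows "r y \<le> r x"
proof -
  have 1: "r b \<le> r a" if "x < a" "a \<le> b" "b < y" for a b
    using DERIV_nonpos_imp_nonincreasing[of a b r] D that by force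
  have 2: "r y \<le> r a" if "x < a" "a < y" for a
  proof -
    have "(r \<longlongrightarrow> r y) (at_left y)" using LC by (simp add: continuous_within)
    moreover have "eventually (\<lambda>b. r b \<le> r a) (at_left y)"
      using eventually_at_left_real[OF that(2)] by eventually_elim (use 1 that in auto)
    ultimately show ?thesis by (intro tendsto_upperbound) auto
  qed
  have "L \<ge> r y"
  proof (rule tendsto_lowerbound[OF RL])
    show "eventually (\<lambda>a. r y \<le> r a) (at_right x)"
      using eventually_at_right_real[OF xy] by eventually_elim (use 2 in auto)
  qed auto
  with L show ?thesis by simp
qed

lemma chain_mono:
  fixes r :: "real \<Rightarrow> real" and \<theta> :: "int \<Rightarrow> real"
  assumes mono: "strict_mono \<theta>"
    and fin: "\<And>a b. finite {k. a < \<theta> k \<and> \<theta> k < b}"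
    and D: "\<And>s. t0 < s \<Longrightarrow> s < t \<Longrightarrow> s \<notin> range \<theta> \<Longrightarrow> \<exists>d. (r has_real_derivative d) (at s) \<and> d \<le> 0"
    and LC: "\<And>s. t0 < s \<Longrightarrow> s \<le> t \<Longrightarrow> continuous (at_left s) r"
    and RC: "\<And>s. t0 \<le> s \<Longrightarrow> s < t \<Longrightarrow> \<exists>L. (r \<longlongrightarrow> L) (at_right s) \<and> L \<le> r s"
    and tt: "t0 \<le> t"
  shows "r t \<le> r t0"
proof -
  have main: "\<forall>y. t0 \<le> y \<longrightarrow> y \<le> t \<longrightarrow> card {k. t0 < \<theta> k \<and> \<theta> k < y} = n \<longrightarrow> r y \<le> r t0" for n
  proof (induction n)
    case 0
    show ?case
    proof (intro allI impI)
      fix y assume y: "t0 \<le> y" "y \<le> t" "card {k. t0 < \<theta> k \<and> \<theta> k < y} = 0"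
      then have e: "{k. t0 < \<theta> k \<and> \<theta> k < y} = {}" using fin by simp
      show "r y \<le> r t0"
      proof (cases "y = t0")
        case False
        with y have "t0 < y" by simp
        from RC[of t0] this y obtain L where "(r \<longlongrightarrow> L) (at_right t0)" "L \<le> r t0" by auto
        then show ?thesis
          by (intro piece_mono[OF \<open>t0 < y\<close>] D LC) (use e y \<open>t0 < y\<close> in auto)
      qed simp
    qed
  next
    case (Suc n)
    show ?case
    proof (intro allI impI)
      fix y assume y: "t0 \<le> y" "y \<le> t" "card {k. t0 < \<theta> k \<and> \<theta> k < y} = Suc n"
      define K where "K = {k. t0 < \<theta> k \<and> \<theta> k < y}"
      have fK: "finite K" "K \<noteq> {}" using fin y unfolding K_def by (metis card.empty nat.distinct(1))+
      define k where "k = Max K"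
      have kK: "k \<in> K" using fK by (simp add: k_def)
      have kmax: "k' \<le> k" if "k' \<in> K" for k' using fK that by (simp add: k_def)
      have lt: "\<theta> k' < \<theta> k" if "k' \<in> K" "k' \<noteq> k" for k'
        using kmax[OF that(1)] that(2) mono by (simp add: strict_mono_less)
      have "{k'. t0 < \<theta> k' \<and> \<theta> k' < \<theta> k} = K - {k}"
        using lt kK by (auto simp: K_def)
      then have c: "card {k'. t0 < \<theta> k' \<and> \<theta> k' < \<theta> k} = n"
        using y fK kK by (simp add: K_def)
      have k1: "t0 < \<theta> k" "\<theta> k < y" using kK by (auto simp: K_def)
      have IH: "r (\<theta> k) \<le> r t0" using Suc.IH k1 c y by auto
      have none: "s \<notin> range \<theta>" if "\<theta> k < s" "s < y" for s
      proof
        assume "s \<in> range \<theta>" then obtain j where j: "s = \<theta> j" by auto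
        then have "j \<in> K" using that k1 by (auto simp: K_def)
        then show False using lt[of j] that j by force
      qed
      from RC[of "\<theta> k"] k1 y obtain L where "(r \<longlongrightarrow> L) (at_right (\<theta> k))" "L \<le> r (\<theta> k)" by auto
      then have "r y \<le> r (\<theta> k)"
        by (intro piece_mono[OF \<open>\<theta> k < y\<close>] D LC) (use k1 y none in auto)
      with IH show "r y \<le> r t0" by simp
    qed
  qed
  then show ?thesis using tt by auto
qed

lemma bb_mv: "bounded_bilinear (\<lambda>(M::real^'n^'n) (v::real^'n). M *v v)"
proof (rule bounded_bilinear.intro)
  fix a a' :: "real^'n^'n" and b b' :: "real^'n" and r :: real
  show "(a + a') *v b = a *v b + a' *v b" by (simp add: matrix_vector_mult_add_rdistrib)
  show "a *v (b + b') = a *v b + a *v b'" by (simp add: matrix_vector_right_distrib)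
  show "(r *\<^sub>R a) *v b = r *\<^sub>R (a *v b)" by (simp add: scaleR_matrix_vector_assoc)
  show "a *v (r *\<^sub>R b) = r *\<^sub>R (a *v b)" by (simp add: vec_eq_iff matrix_vector_mult_def sum_distrib_left algebra_simps)
  show "\<exists>K. \<forall>a b. norm (a *v b) \<le> norm (a::real^'n^'n) * norm b * K"
  proof (intro exI allI)
    fix a :: "real^'n^'n" and b :: "real^'n"
    have "norm (a *v b) \<le> onorm ((*v) a) * norm b" by (rule onorm) simp
    also have "onorm ((*v) a) \<le> (\<Sum>i\<in>(UNIV::'n set). \<Sum>j\<in>(UNIV::'n set). \<bar>a $ i $ j\<bar>)"
      by (rule onorm_le_matrix_component_sum)
    also have "\<dots> \<le> (\<Sum>i\<in>(UNIV::'n set). \<Sum>j\<in>(UNIV::'n set). norm a)"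
      by (intro sum_mono) (rule entry_le)
    finally show "norm (a *v b) \<le> norm a * norm b * (real CARD('n) * real CARD('n))"
      by (simp add: algebra_simps mult_right_mono)
  qed
qed

locale thetas =
  fixes \<theta> :: "int \<Rightarrow> real" and p :: nat and \<omega> :: real
  assumes mono: "strict_mono \<theta>"
    and per: "\<forall>k. \<theta> (k + int p) = \<theta> k + \<omega>"
    and \<omega>_pos: "\<omega> > 0"
begin

lemma p_pos: "p > 0"
  using per \<omega>_pos by (cases p) auto

lemma shift_nat: "\<theta> (k + int j * int p) = \<theta> k + real j * \<omega>"
proof (induction j)
  case (Suc j)
  have "\<theta> (k + int (Suc j) * int p) = \<theta> ((k + int j * int p) + int p)" by (simp add: algebra_simps)
  also have "\<dots> = \<theta> (k + int j * int p) + \<omega>" using per by blast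
  also have "\<dots> = \<theta> k + real (Suc j) * \<omega>" using Suc by (simp add: algebra_simps)
  finally show ?case .
qed simp

lemma shift_int: "\<theta> (k + j * int p) = \<theta> k + of_int j * \<omega>"
proof (cases "j \<ge> 0")
  case True
  then show ?thesis using shift_nat[of k "nat j"] by simp
next
  case False
  then have "\<theta> ((k + j * int p) + int (nat (-j)) * int p) = \<theta> (k + j * int p) + real (nat (-j)) * \<omega>"
    by (rule_tac shift_nat)
  with False show ?thesis by simp
qed

lemma less_iff: "\<theta> a < \<theta> b \<longleftrightarrow> a < b"
  using mono by (simp add: strict_mono_less)

lemma le_iff: "\<theta> a \<le> \<theta> b \<longleftrightarrow> a \<le> b"
  using mono by (simp add: strict_mono_less_eq)

lemma below: "\<exists>k. \<theta> k < x"
proof -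
  obtain j :: nat where j: "real j > (\<theta> 0 - x) / \<omega>" using reals_Archimedean2 by blast
  then have "real j * \<omega> > \<theta> 0 - x" using \<omega>_pos by (simp add: field_simps)
  then have "\<theta> (0 + (- int j) * int p) < x" using shift_int[of 0 "- int j"] by simp
  then show ?thesis by blast
qed

lemma above: "\<exists>k. x < \<theta> k"
proof -
  obtain j :: nat where j: "real j > (x - \<theta> 0) / \<omega>" using reals_Archimedean2 by blast
  then have "real j * \<omega> > x - \<theta> 0" using \<omega>_pos by (simp add: field_simps)
  then have "x < \<theta> (0 + int j * int p)" using shift_nat[of 0 j] by simp
  then show ?thesis by blast
qed

lemma fin_le: "finite {k. a \<le> \<theta> k \<and> \<theta> k \<le> b}"
proof -
  obtain k1 where k1: "\<theta> k1 < a" using below by blast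
  obtain k2 where k2: "b < \<theta> k2" using above by blast
  have "{k. a \<le> \<theta> k \<and> \<theta> k \<le> b} \<subseteq> {k1..k2}"
  proof
    fix k assume "k \<in> {k. a \<le> \<theta> k \<and> \<theta> k \<le> b}"
    then have "\<theta> k1 < \<theta> k" "\<theta> k < \<theta> k2" using k1 k2 by auto
    then show "k \<in> {k1..k2}" by (simp add: less_iff)
  qed
  then show ?thesis by (rule finite_subset) simp
qed

lemma fin: "finite {k. P k \<and> a \<le> \<theta> k \<and> \<theta> k \<le> b}"
  by (rule finite_subset[OF _ fin_le[of a b]]) auto

lemma fin_oo: "finite {k. a < \<theta> k \<and> \<theta> k < b}"
  by (rule finite_subset[OF _ fin_le[of a b]]) auto

lemma fin_co: "finite {k. a \<le> \<theta> k \<and> \<theta> k < b}"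
  by (rule finite_subset[OF _ fin_le[of a b]]) auto

lemma fin_oc: "finite {k. a < \<theta> k \<and> \<theta> k \<le> b}"
  by (rule finite_subset[OF _ fin_le[of a b]]) auto

lemma bracket: "\<exists>k. \<theta> k < s \<and> s \<le> \<theta> (k + 1)"
proof -
  obtain k1 where k1: "\<theta> k1 < s" using below by blast
  define K where "K = {k. k1 \<le> k \<and> \<theta> k < s}"
  obtain k2 where k2: "s < \<theta> k2" using above by blast
  have "K \<subseteq> {k1..k2}"
  proof
    fix k assume "k \<in> K"
    then have "k1 \<le> k" "\<theta> k < \<theta> k2" using k2 by (auto simp: K_def)
    then show "k \<in> {k1..k2}" by (simp add: less_iff)
  qed
  then have fK: "finite K" by (rule finite_subset) simp
  have "k1 \<in> K" using k1 by (simp add: K_def)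
  define k where "k = Max K"
  have "k \<in> K" unfolding k_def by (rule Max_in[OF fK]) (use \<open>k1 \<in> K\<close> in auto)
  moreover have "\<not> (k + 1 \<in> K)" using fK by (metis Max_ge k_def less_add_one not_le)
  ultimately show ?thesis by (auto simp: K_def)
qed

lemma card_window: "card {k. a \<le> \<theta> k \<and> \<theta> k < a + \<omega>} \<le> p"
proof (cases "{k. a \<le> \<theta> k \<and> \<theta> k < a + \<omega>} = {}")
  case False
  define S where "S = {k. a \<le> \<theta> k \<and> \<theta> k < a + \<omega>}"
  have fS: "finite S" using fin_co by (simp add: S_def)
  define m where "m = Min S"
  have mS: "m \<in> S" unfolding m_def by (rule Min_in[OF fS]) (use False in \<open>simp add: S_def\<close>)
  have "S \<subseteq> {m..<m + int p}"
  proof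
    fix k assume kS: "k \<in> S"
    have "m \<le> k" using fS kS by (simp add: m_def)
    moreover have "k < m + int p"
    proof (rule ccontr)
      assume "\<not> k < m + int p"
      then have "\<theta> (m + int p) \<le> \<theta> k" by (simp add: le_iff)
      then have "\<theta> m + \<omega> \<le> \<theta> k" using per by simp
      then show False using mS kS by (simp add: S_def)
    qed
    ultimately show "k \<in> {m..<m + int p}" by simp
  qed
  then have "card S \<le> card {m..<m + int p}" by (rule card_mono[rotated]) simp
  then show ?thesis by (simp add: S_def)
next
  case True
  then show ?thesis by (simp only: True card.empty)
qed

lemma geom_sum:
  assumes mu: "\<mu> > 0"
  shows "(\<Sum>k\<in>{k. t0 \<le> \<theta> k \<and> \<theta> k < t}. exp (- \<mu> * (t - \<theta> k))) \<le> real p / (1 - exp (- \<mu> * \<omega>))"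
proof -
  define r where "r = exp (- \<mu> * \<omega>)"
  have r: "0 < r" "r < 1" using mu \<omega>_pos by (auto simp: r_def)
  define F where "F t = (\<Sum>k\<in>{k. t0 \<le> \<theta> k \<and> \<theta> k < t}. exp (- \<mu> * (t - \<theta> k)))" for t
  have "\<forall>t. t - t0 \<le> real n * \<omega> \<longrightarrow> F t \<le> real p / (1 - r)" for n
  proof (induction n)
    case 0
    have "F t = 0" if "t - t0 \<le> 0" for t
    proof -
      have "{k. t0 \<le> \<theta> k \<and> \<theta> k < t} = {}" using that by force
      then show ?thesis unfolding F_def by (simp only: sum.empty)
    qed
    moreover have "0 \<le> real p / (1 - r)" using r by simp
    ultimately show ?case by auto
  next
    case (Suc n)
    show ?case
    proof (intro allI impI)
      fix t assume t: "t - t0 \<le> real (Suc n) * \<omega>"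
      define S1 where "S1 = {k. t0 \<le> \<theta> k \<and> \<theta> k < t - \<omega>}"
      define S2 where "S2 = {k. t0 \<le> \<theta> k \<and> \<theta> k < t \<and> t - \<omega> \<le> \<theta> k}"
      have split: "{k. t0 \<le> \<theta> k \<and> \<theta> k < t} = S1 \<union> S2" "S1 \<inter> S2 = {}"
        using \<omega>_pos by (auto simp: S1_def S2_def)
      have f1: "finite S1" using fin_co by (simp add: S1_def)
      have f2: "finite S2" by (rule finite_subset[OF _ fin_co[of t0 t]]) (auto simp: S2_def)
      have "F t = (\<Sum>k\<in>S1. exp (- \<mu> * (t - \<theta> k))) + (\<Sum>k\<in>S2. exp (- \<mu> * (t - \<theta> k)))"
        unfolding F_def split(1) by (rule sum.union_disjoint[OF f1 f2 split(2)])
      also have "(\<Sum>k\<in>S1. exp (- \<mu> * (t - \<theta> k))) = r * F (t - \<omega>)"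
        unfolding F_def S1_def r_def sum_distrib_left
        by (rule sum.cong) (auto simp: exp_add[symmetric] algebra_simps)
      also have "(\<Sum>k\<in>S2. exp (- \<mu> * (t - \<theta> k))) \<le> (\<Sum>k\<in>S2. 1)"
        by (rule sum_mono) (use mu in \<open>auto simp: S2_def\<close>)
      also have "(\<Sum>k\<in>S2. (1::real)) \<le> real p"
      proof -
        have "S2 \<subseteq> {k. t - \<omega> \<le> \<theta> k \<and> \<theta> k < t - \<omega> + \<omega>}" by (auto simp: S2_def)
        then have "card S2 \<le> card {k. t - \<omega> \<le> \<theta> k \<and> \<theta> k < t - \<omega> + \<omega>}"
          by (rule card_mono[rotated]) (rule fin_co)
        then show ?thesis using card_window[of "t - \<omega>"] by simp
      qed
      also have "F (t - \<omega>) \<le> real p / (1 - r)"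
        using Suc.IH t by (auto simp: algebra_simps)
      then have "r * F (t - \<omega>) \<le> r * (real p / (1 - r))" using r by (intro mult_left_mono) auto
      finally have "F t \<le> r * (real p / (1 - r)) + real p" by simp
      also have "\<dots> = real p / (1 - r)" using r by (simp add: field_simps)
      finally show "F t \<le> real p / (1 - r)" .
    qed
  qed
  moreover obtain n :: nat where "real n > (t - t0) / \<omega>" using reals_Archimedean2 by blast
  then have "t - t0 \<le> real n * \<omega>" using \<omega>_pos by (simp add: field_simps)
  ultimately show ?thesis by (simp add: F_def r_def)
qed

end

lemma matpow_0[simp]: "matpow M 0 = mat 1" by (simp add: matpow_def)
lemma matpow_Suc: "matpow M (Suc n) = M ** matpow M n" by (simp add: matpow_def)
lemma matpow_Suc2: "matpow M (Suc n) = matpow M n ** M"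
  by (induction n) (simp_all add: matpow_Suc matrix_mul_assoc)
lemma matpow_comm: "A ** M = M ** A \<Longrightarrow> A ** matpow M n = matpow M n ** A"
proof (induction n)
  case (Suc n)
  have "A ** matpow M (Suc n) = (A ** M) ** matpow M n" by (simp add: matpow_Suc matrix_mul_assoc)
  also have "\<dots> = M ** (A ** matpow M n)" using Suc.prems by (simp add: matrix_mul_assoc)
  also have "\<dots> = matpow M (Suc n) ** A" using Suc by (simp add: matpow_Suc matrix_mul_assoc)
  finally show ?case .
qed simp

lemma matrix_add_rdistrib': "(A + B) ** C = A ** C + B ** (C::real^'n^'n)"
  by (simp add: matrix_matrix_mult_def vec_eq_iff sum.distrib distrib_right)

lemma mv_norm_le: "norm (M *v x) \<le> mnorm M * norm (x::real^'n)" for M :: "real^'n^'n"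
  unfolding mnorm_def by (rule onorm) simp

lemma mv_tendsto: "(f \<longlongrightarrow> a) F \<Longrightarrow> (g \<longlongrightarrow> b) F \<Longrightarrow> ((\<lambda>x. f x *v g x) \<longlongrightarrow> a *v b) F"
  for f :: "'a \<Rightarrow> real^'n^'n" and g :: "'a \<Rightarrow> real^'n"
  using bounded_bilinear.tendsto[OF bb_mv] by blast

lemma mv_cont: "continuous F f \<Longrightarrow> continuous F g \<Longrightarrow> continuous F (\<lambda>x. f x *v g x)"
  for f :: "'a::t2_space \<Rightarrow> real^'n^'n" and g :: "'a \<Rightarrow> real^'n"
  using bounded_bilinear.continuous[OF bb_mv] by blast

lemma mv_deriv: "(f has_vector_derivative f') (at x within s) \<Longrightarrow> (g has_vector_derivative g') (at x within s) \<Longrightarrow>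
   ((\<lambda>x. f x *v g x) has_vector_derivative (f x *v g' + f' *v g x)) (at x within s)"
  for f :: "real \<Rightarrow> real^'n^'n" and g :: "real \<Rightarrow> real^'n"
  using bounded_bilinear.has_vector_derivative[OF bb_mv] by blast

context thetas
begin

lemma U_form: "matriciant A B \<theta> t s = mexp ((t - s) *\<^sub>R A) ** matpow (mat 1 + B) (num_in \<theta> {s..<t})"
proof (cases "t = s")
  case True
  have "{k. \<theta> k \<in> {s..<t}} = {}" using True by auto
  then show ?thesis using True by (simp add: matriciant_def num_in_def mexp_zero)
qed (simp add: matriciant_def)

lemma cnt_piece:
  assumes "\<theta> k < s" "s \<le> \<theta> (k + 1)"
  shows "num_in \<theta> {s..<t} = card {k'. \<theta> k < \<theta> k' \<and> \<theta> k' < t}"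
proof -
  have "{k'. \<theta> k' \<in> {s..<t}} = {k'. \<theta> k < \<theta> k' \<and> \<theta> k' < t}"
  proof (intro set_eqI iffI)
    fix k' assume "k' \<in> {k'. \<theta> k' \<in> {s..<t}}" then show "k' \<in> {k'. \<theta> k < \<theta> k' \<and> \<theta> k' < t}"
      using assms by auto
  next
    fix k' assume k': "k' \<in> {k'. \<theta> k < \<theta> k' \<and> \<theta> k' < t}"
    then have "k + 1 \<le> k'" by (simp add: less_iff)
    then have "\<theta> (k + 1) \<le> \<theta> k'" by (simp add: le_iff)
    with k' assms show "k' \<in> {k'. \<theta> k' \<in> {s..<t}}" by auto
  qed
  then show ?thesis by (simp add: num_in_def)
qed

lemma cnt_at:
  assumes "\<theta> k < t"
  shows "num_in \<theta> {\<theta> k..<t} = Suc (card {k'. \<theta> k < \<theta> k' \<and> \<theta> k' < t})"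
proof -
  have "{k'. \<theta> k' \<in> {\<theta> k..<t}} = insert k {k'. \<theta> k < \<theta> k' \<and> \<theta> k' < t}"
    using assms by (auto simp: less_iff le_iff)
  then show ?thesis using fin_oo by (simp add: num_in_def)
qed

lemma U_piece:
  assumes "\<theta> k < s" "s \<le> \<theta> (k + 1)"
  shows "matriciant A B \<theta> t s = mexp ((t - s) *\<^sub>R A) ** matpow (mat 1 + B) (card {k'. \<theta> k < \<theta> k' \<and> \<theta> k' < t})"
  using U_form[of A B t s] cnt_piece[OF assms, of t] by simp

lemma U_at:
  assumes "\<theta> k < t"
  shows "matriciant A B \<theta> t (\<theta> k) = (mexp ((t - \<theta> k) *\<^sub>R A) ** matpow (mat 1 + B) (card {k'. \<theta> k < \<theta> k' \<and> \<theta> k' < t})) ** (mat 1 + B)"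
  using U_form[of A B t "\<theta> k"] cnt_at[OF assms] by (simp add: matpow_Suc2 matrix_mul_assoc)

lemma E_cont: "continuous (at s within S) (\<lambda>s. mexp ((t - s) *\<^sub>R A))" for A :: "real^'n^'n"
  using mexp_deriv[where t=t and A=A and s=s and S=S] has_vector_derivative_continuous by blast

end

lemma mv_neg: "(- M) *v x = - (M *v x)" for M :: "real^'n^'n"
  by (simp add: vec_eq_iff matrix_vector_mult_def sum_negf)

context thetas
begin

lemma key:
  fixes A B :: "real^'n^'n" and w F :: "real \<Rightarrow> real^'n" and H :: "int \<Rightarrow> real^'n"
  assumes AB: "A ** B = B ** A"
    and W1: "\<And>s. s \<notin> range \<theta> \<Longrightarrow> (w has_vector_derivative A *v w s + F s) (at s)"
    and W2l: "\<And>k. continuous (at_left (\<theta> k)) w"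
    and W2r: "\<And>k. (w \<longlongrightarrow> w (\<theta> k) + B *v w (\<theta> k) + H k) (at_right (\<theta> k))"
    and Nb: "\<And>s. s \<le> t \<Longrightarrow> mnorm (matriciant A B \<theta> t s) \<le> N * exp (- lam * (t - s))"
    and FB: "\<And>s. s \<le> t \<Longrightarrow> s \<notin> range \<theta> \<Longrightarrow> N * exp (- lam * (t - s)) * norm (F s) \<le> C1 * exp (- \<mu> * (t - s))"
    and HB: "\<And>k. \<theta> k < t \<Longrightarrow> N * exp (- lam * (t - \<theta> k)) * norm (H k) \<le> C2 * exp (- \<mu> * (t - \<theta> k))"
    and mu: "\<mu> > 0" and C: "C1 \<ge> 0" "C2 \<ge> 0" and tt: "t0 \<le> t"
  shows "norm (w t - matriciant A B \<theta> t t0 *v w t0) \<le> C1 / \<mu> + C2 * (real p / (1 - exp (- \<mu> * \<omega>)))"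
proof -
  define P where "P = mat 1 + B"
  define U where "U s = matriciant A B \<theta> t s" for s
  define E where "E s = mexp ((t - s) *\<^sub>R A)" for s
  define c where "c k = card {k'. \<theta> k < \<theta> k' \<and> \<theta> k' < t}" for k
  define v where "v s = U s *v w s" for s
  have AP: "A ** matpow P n = matpow P n ** A" for n
    by (rule matpow_comm) (simp add: P_def matrix_add_ldistrib matrix_add_rdistrib' AB)
  have Upiece: "U s = E s ** matpow P (c k)" if "\<theta> k < s" "s \<le> \<theta> (k+1)" for k s
    using U_piece[OF that] by (simp add: U_def E_def P_def c_def)
  have Uat: "U (\<theta> k) = (E (\<theta> k) ** matpow P (c k)) ** P" if "\<theta> k < t" for k
    using U_at[OF that] by (simp add: U_def E_def P_def c_def)
  have UN: "norm (U s *v x) \<le> N * exp (- lam * (t - s)) * norm x" if "s \<le> t" for s x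
  proof -
    have "norm (U s *v x) \<le> mnorm (U s) * norm x" by (rule mv_norm_le)
    also have "\<dots> \<le> N * exp (- lam * (t - s)) * norm x"
      using Nb[OF that] by (intro mult_right_mono) (auto simp: U_def)
    finally show ?thesis .
  qed
  have Econt: "continuous (at s within S) E" for s S
    unfolding E_def by (rule E_cont)
  have wcont: "continuous (at_left s) w" for s
  proof (cases "s \<in> range \<theta>")
    case True then show ?thesis using W2l by auto
  next
    case False
    then have "continuous (at s) w" using W1 has_vector_derivative_continuous by blast
    then show ?thesis by (rule continuous_at_imp_continuous_at_within)
  qed
  have vcont: "continuous (at_left s) v" for s
  proof -
    obtain k where k: "\<theta> k < s" "s \<le> \<theta> (k + 1)" using bracket by blast
    define g where "g s' = E s' *v (matpow P (c k) *v w s')" for s'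
    have "continuous (at_left s) g" unfolding g_def
      by (intro mv_cont Econt continuous_intros wcont)
    then have "(g \<longlongrightarrow> g s) (at_left s)" by (simp add: continuous_within)
    moreover have "g s = v s" using Upiece[OF k] by (simp add: g_def v_def matrix_vector_mul_assoc)
    moreover have "eventually (\<lambda>s'. g s' = v s') (at_left s)"
      using eventually_at_left_real[OF k(1)]
    proof eventually_elim
      case (elim s')
      then have "U s' = E s' ** matpow P (c k)" using k by (intro Upiece) auto
      then show ?case by (simp add: g_def v_def matrix_vector_mul_assoc)
    qed
    ultimately have "(v \<longlongrightarrow> v s) (at_left s)" using Lim_transform_eventually by fastforce
    then show ?thesis by (simp add: continuous_within)
  qed
  have vderiv: "(v has_vector_derivative U s *v F s) (at s)" if s: "s \<notin> range \<theta>" for s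
  proof -
    obtain k where k: "\<theta> k < s" "s \<le> \<theta> (k + 1)" using bracket by blast
    have k2: "s < \<theta> (k + 1)" using k s by (metis order.order_iff_strict rangeI)
    define Pk where "Pk = matpow P (c k)"
    define g where "g s' = E s' *v (Pk *v w s')" for s'
    have dE: "(E has_vector_derivative - (E s ** A)) (at s)"
      unfolding E_def by (rule mexp_deriv)
    have dw: "((\<lambda>s'. Pk *v w s') has_vector_derivative Pk *v (A *v w s + F s)) (at s)"
      by (rule bounded_linear.has_vector_derivative[OF matrix_vector_mul_bounded_linear W1[OF s]])
    have "(g has_vector_derivative (E s *v (Pk *v (A *v w s + F s)) + (- (E s ** A)) *v (Pk *v w s))) (at s)"
      unfolding g_def by (rule mv_deriv[OF dE dw])
    moreover have "E s *v (Pk *v (A *v w s + F s)) + (- (E s ** A)) *v (Pk *v w s) = U s *v F s"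
    proof -
      have "(E s ** A) *v (Pk *v w s) = (E s ** (A ** Pk)) *v w s"
        by (simp add: matrix_vector_mul_assoc matrix_mul_assoc)
      also have "\<dots> = (E s ** (Pk ** A)) *v w s" using AP[of "c k"] by (simp add: Pk_def)
      also have "\<dots> = E s *v (Pk *v (A *v w s))" by (simp add: matrix_vector_mul_assoc matrix_mul_assoc)
      finally have X: "(E s ** A) *v (Pk *v w s) = E s *v (Pk *v (A *v w s))" .
      have Ueq: "U s = E s ** Pk" using Upiece[OF k] by (simp add: Pk_def)
      have 1: "E s *v (Pk *v (A *v w s + F s)) = E s *v (Pk *v (A *v w s)) + E s *v (Pk *v F s)"
        by (simp only: matrix_vector_right_distrib)
      have 2: "(- (E s ** A)) *v (Pk *v w s) = - (E s *v (Pk *v (A *v w s)))"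
        by (simp only: mv_neg X)
      have 3: "E s *v (Pk *v F s) = U s *v F s" by (simp add: Ueq matrix_vector_mul_assoc)
      show ?thesis unfolding 1 2 3 by simp
    qed
    ultimately have dg: "(g has_vector_derivative U s *v F s) (at s)" by simp
    show ?thesis
    proof (rule has_vector_derivative_transform_within_open[OF dg, of "{\<theta> k<..<\<theta> (k+1)}"])
      show "s \<in> {\<theta> k<..<\<theta> (k+1)}" using k k2 by simp
      fix y assume "y \<in> {\<theta> k<..<\<theta> (k+1)}"
      then have "U y = E y ** Pk" using Upiece[of k y] by (simp add: Pk_def)
      then show "g y = v y" by (simp add: g_def v_def matrix_vector_mul_assoc)
    qed simp
  qed
  define S where "S s = (\<Sum>k\<in>{k. t0 \<le> \<theta> k \<and> \<theta> k < s}. exp (- \<mu> * (t - \<theta> k)))" for s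
  define Sk where "Sk k = (\<Sum>k'\<in>{k'. t0 \<le> \<theta> k' \<and> \<theta> k' \<le> \<theta> k}. exp (- \<mu> * (t - \<theta> k')))" for k
  have Sconst: "S s' = Sk k" if "\<theta> k < s'" "s' \<le> \<theta> (k+1)" for k s'
  proof -
    have "{k'. t0 \<le> \<theta> k' \<and> \<theta> k' < s'} = {k'. t0 \<le> \<theta> k' \<and> \<theta> k' \<le> \<theta> k}"
    proof (intro set_eqI iffI)
      fix k' assume "k' \<in> {k'. t0 \<le> \<theta> k' \<and> \<theta> k' < s'}"
      then have "t0 \<le> \<theta> k'" "\<theta> k' < \<theta> (k + 1)" using that by auto
      then show "k' \<in> {k'. t0 \<le> \<theta> k' \<and> \<theta> k' \<le> \<theta> k}" by (simp add: less_iff le_iff)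
    qed (use that in auto)
    then show ?thesis by (simp add: S_def Sk_def)
  qed
  have Sjump: "Sk k = S (\<theta> k) + exp (- \<mu> * (t - \<theta> k))" if "t0 \<le> \<theta> k" for k
  proof -
    have "{k'. t0 \<le> \<theta> k' \<and> \<theta> k' \<le> \<theta> k} = insert k {k'. t0 \<le> \<theta> k' \<and> \<theta> k' < \<theta> k}"
      using that by (auto simp: less_iff le_iff)
    then show ?thesis using fin_co[of t0 "\<theta> k"] by (simp add: S_def Sk_def)
  qed
  have S0: "S t0 = 0"
  proof -
    have "{k. t0 \<le> \<theta> k \<and> \<theta> k < t0} = {}" by auto
    then show ?thesis unfolding S_def by (simp only: sum.empty)
  qed
  have St: "S t \<le> real p / (1 - exp (- \<mu> * \<omega>))"
    unfolding S_def by (rule geom_sum[OF mu])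
  have RHS: "0 \<le> C1 / \<mu> + C2 * (real p / (1 - exp (- \<mu> * \<omega>)))"
    using C mu \<omega>_pos by (intro add_nonneg_nonneg mult_nonneg_nonneg divide_nonneg_nonneg) auto
  have vt: "v t = w t" by (simp add: v_def U_def matriciant_def)
  have vt0: "v t0 = matriciant A B \<theta> t t0 *v w t0" by (simp add: v_def U_def)
  define d where "d = v t - v t0"
  show ?thesis
  proof (cases "d = 0")
    case True
    then show ?thesis using RHS vt vt0 by (simp add: d_def)
  next
    case False
    define u where "u = d /\<^sub>R norm d"
    have nu: "norm u = 1" using False by (simp add: u_def)
    have du: "d \<bullet> u = norm d" using False by (simp add: u_def power2_norm_eq_inner[symmetric] power2_eq_square)
    define \<Phi> where "\<Phi> s = C1 * exp (- \<mu> * (t - s)) / \<mu> + C2 * S s" for s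
    define r where "r s = v s \<bullet> u - \<Phi> s" for s
    have rderiv: "(r has_real_derivative ((U s *v F s) \<bullet> u - C1 * exp (- \<mu> * (t - s)))) (at s)"
      if s: "s \<notin> range \<theta>" for s
    proof -
      obtain k where k: "\<theta> k < s" "s \<le> \<theta> (k + 1)" using bracket by blast
      have k2: "s < \<theta> (k + 1)" using k s by (metis order.order_iff_strict rangeI)
      have d1: "((\<lambda>s'. v s' \<bullet> u) has_real_derivative (U s *v F s) \<bullet> u) (at s)"
        unfolding has_real_derivative_iff_has_vector_derivative
        by (rule bounded_linear.has_vector_derivative[OF bounded_linear_inner_left vderiv[OF s]])
      have d2: "((\<lambda>s'. C1 * exp (- \<mu> * (t - s')) / \<mu> + C2 * Sk k) has_real_derivative C1 * exp (- \<mu> * (t - s))) (at s)"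
        using mu by (auto intro!: derivative_eq_intros simp: field_simps)
      have "((\<lambda>s'. v s' \<bullet> u - (C1 * exp (- \<mu> * (t - s')) / \<mu> + C2 * Sk k)) has_real_derivative
              ((U s *v F s) \<bullet> u - C1 * exp (- \<mu> * (t - s)))) (at s)"
        by (rule DERIV_diff[OF d1 d2])
      then show ?thesis
      proof (rule has_field_derivative_transform_within_open[of _ _ _ "{\<theta> k<..<\<theta> (k+1)}"])
        show "s \<in> {\<theta> k<..<\<theta> (k+1)}" using k k2 by simp
        fix y assume "y \<in> {\<theta> k<..<\<theta> (k+1)}"
        then have "S y = Sk k" by (intro Sconst) auto
        then show "v y \<bullet> u - (C1 * exp (- \<mu> * (t - y)) / \<mu> + C2 * Sk k) = r y"
          by (simp add: r_def \<Phi>_def)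
      qed simp
    qed
    have D: "\<exists>dd. (r has_real_derivative dd) (at s) \<and> dd \<le> 0"
      if "t0 < s" "s < t" "s \<notin> range \<theta>" for s
    proof (intro exI conjI)
      show "(r has_real_derivative ((U s *v F s) \<bullet> u - C1 * exp (- \<mu> * (t - s)))) (at s)"
        by (rule rderiv[OF that(3)])
      have "(U s *v F s) \<bullet> u \<le> norm (U s *v F s) * norm u" by (rule norm_cauchy_schwarz)
      also have "\<dots> = norm (U s *v F s)" using nu by simp
      also have "\<dots> \<le> N * exp (- lam * (t - s)) * norm (F s)" using UN that by simp
      also have "\<dots> \<le> C1 * exp (- \<mu> * (t - s))" using FB that by simp
      finally show "(U s *v F s) \<bullet> u - C1 * exp (- \<mu> * (t - s)) \<le> 0" by simp
    qed
    have Scont: "continuous (at_left s) S" for s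
    proof -
      obtain k where k: "\<theta> k < s" "s \<le> \<theta> (k + 1)" using bracket by blast
      have "eventually (\<lambda>s'. S s' = S s) (at_left s)"
        using eventually_at_left_real[OF k(1)]
      proof eventually_elim
        case (elim s')
        then show ?case using Sconst[OF k] Sconst[of k s'] k by auto
      qed
      then have "(S \<longlongrightarrow> S s) (at_left s)" by (rule tendsto_eventually)
      then show ?thesis by (simp add: continuous_within)
    qed
    have LC: "continuous (at_left s) r" for s
      unfolding r_def \<Phi>_def
      by (intro continuous_intros vcont Scont) (use mu in auto)
    have RC: "\<exists>L. (r \<longlongrightarrow> L) (at_right s) \<and> L \<le> r s" if s: "t0 \<le> s" "s < t" for s
    proof (cases "s \<in> range \<theta>")
      case False
      have "isCont r s" using rderiv[OF False] by (rule DERIV_isCont)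
      then have "(r \<longlongrightarrow> r s) (at s)" by (simp add: isCont_def)
      then have "(r \<longlongrightarrow> r s) (at_right s)"
        by (simp add: filterlim_at_split)
      then show ?thesis by auto
    next
      case True
      then obtain k where ks: "s = \<theta> k" by auto
      define Pk where "Pk = matpow P (c k)"
      have kk: "\<theta> k < \<theta> (k + 1)" by (simp add: less_iff)
      have tk: "\<theta> k < t" "t0 \<le> \<theta> k" using s ks by auto
      define vp where "vp = E (\<theta> k) *v (Pk *v (w (\<theta> k) + B *v w (\<theta> k) + H k))"
      have ev: "eventually (\<lambda>s'. s' \<in> {\<theta> k<..<\<theta> (k+1)}) (at_right (\<theta> k))"
        by (rule eventually_at_right_real[OF kk])
      have vlim: "(v \<longlongrightarrow> vp) (at_right (\<theta> k))"
      proof -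
        have "((\<lambda>s'. E s' *v (Pk *v w s')) \<longlongrightarrow> vp) (at_right (\<theta> k))"
          unfolding vp_def
          by (intro mv_tendsto bounded_linear.tendsto[OF matrix_vector_mul_bounded_linear] W2r)
             (use Econt[of "\<theta> k" "{\<theta> k<..}"] in \<open>simp add: continuous_within\<close>)
        moreover have "eventually (\<lambda>s'. E s' *v (Pk *v w s') = v s') (at_right (\<theta> k))"
          using ev
        proof eventually_elim
          case (elim s')
          then have "U s' = E s' ** Pk" using Upiece[of k s'] by (simp add: Pk_def)
          then show ?case by (simp add: v_def matrix_vector_mul_assoc)
        qed
        ultimately show ?thesis using Lim_transform_eventually by fastforce
      qed
      have Slim: "(S \<longlongrightarrow> S (\<theta> k) + exp (- \<mu> * (t - \<theta> k))) (at_right (\<theta> k))"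
      proof -
        have "eventually (\<lambda>s'. S s' = S (\<theta> k) + exp (- \<mu> * (t - \<theta> k))) (at_right (\<theta> k))"
          using ev
        proof eventually_elim
          case (elim s')
          then show ?case using Sconst[of k s'] Sjump[OF tk(2)] by auto
        qed
        then show ?thesis by (rule tendsto_eventually)
      qed
      define L where "L = vp \<bullet> u - (C1 * exp (- \<mu> * (t - \<theta> k)) / \<mu> + C2 * (S (\<theta> k) + exp (- \<mu> * (t - \<theta> k))))"
      have rlim: "(r \<longlongrightarrow> L) (at_right (\<theta> k))"
        unfolding r_def \<Phi>_def L_def
        by (intro tendsto_intros vlim Slim)
           (use mu in \<open>auto intro!: tendsto_eq_intros\<close>)
      have Ebound: "norm (E (\<theta> k) *v (Pk *v x)) \<le> N * exp (- lam * (t - \<theta> k)) * norm x" for x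
      proof -
        have "((\<lambda>s'. norm (E s' *v (Pk *v x))) \<longlongrightarrow> norm (E (\<theta> k) *v (Pk *v x))) (at_right (\<theta> k))"
          by (intro tendsto_intros mv_tendsto)
             (use Econt[of "\<theta> k" "{\<theta> k<..}"] in \<open>simp add: continuous_within\<close>)
        moreover have "((\<lambda>s'. N * exp (- lam * (t - s')) * norm x) \<longlongrightarrow> N * exp (- lam * (t - \<theta> k)) * norm x) (at_right (\<theta> k))"
          by (intro tendsto_intros)
        moreover have "eventually (\<lambda>s'. norm (E s' *v (Pk *v x)) \<le> N * exp (- lam * (t - s')) * norm x) (at_right (\<theta> k))"
        proof -
          have "eventually (\<lambda>s'. s' \<in> {\<theta> k<..<min (\<theta> (k+1)) t}) (at_right (\<theta> k))"
            by (rule eventually_at_right_real) (use kk tk in simp)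
          then show ?thesis
          proof eventually_elim
          case (elim s')
          then have s': "\<theta> k < s'" "s' < \<theta> (k + 1)" "s' < t" by auto
          then have "U s' = E s' ** Pk" using Upiece[of k s'] by (simp add: Pk_def)
          then have "E s' *v (Pk *v x) = U s' *v x" by (simp add: matrix_vector_mul_assoc)
          then show "norm (E s' *v (Pk *v x)) \<le> N * exp (- lam * (t - s')) * norm x"
            using UN[of s' x] s' by simp
          qed
        qed
        ultimately show ?thesis by (intro tendsto_le[of "at_right (\<theta> k)"]) auto
      qed
      have vk: "v (\<theta> k) = E (\<theta> k) *v (Pk *v (w (\<theta> k) + B *v w (\<theta> k)))"
        using Uat[OF tk(1)] by (simp add: v_def Pk_def P_def matrix_vector_mul_assoc[symmetric]
             matrix_vector_mult_add_rdistrib)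
      have "vp - v (\<theta> k) = E (\<theta> k) *v (Pk *v H k)"
        unfolding vp_def vk by (simp add: matrix_vector_right_distrib)
      then have "vp \<bullet> u - v (\<theta> k) \<bullet> u = (E (\<theta> k) *v (Pk *v H k)) \<bullet> u"
        by (simp add: inner_diff_left[symmetric])
      also have "\<dots> \<le> norm (E (\<theta> k) *v (Pk *v H k)) * norm u" by (rule norm_cauchy_schwarz)
      also have "\<dots> \<le> N * exp (- lam * (t - \<theta> k)) * norm (H k)" using Ebound nu by simp
      also have "\<dots> \<le> C2 * exp (- \<mu> * (t - \<theta> k))" by (rule HB[OF tk(1)])
      finally have "L \<le> r (\<theta> k)" by (simp add: L_def r_def \<Phi>_def algebra_simps)
      then show ?thesis using rlim ks by auto
    qed
    have "r t \<le> r t0"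
      by (rule chain_mono[OF mono fin_oo D LC RC tt])
    then have "v t \<bullet> u - v t0 \<bullet> u \<le> \<Phi> t - \<Phi> t0" by (simp add: r_def)
    moreover have "v t \<bullet> u - v t0 \<bullet> u = norm d" using du by (simp add: d_def inner_diff_left)
    moreover have "\<Phi> t - \<Phi> t0 \<le> C1 / \<mu> + C2 * (real p / (1 - exp (- \<mu> * \<omega>)))"
    proof -
      have "\<Phi> t - \<Phi> t0 = C1 / \<mu> - C1 * exp (- \<mu> * (t - t0)) / \<mu> + C2 * S t"
        by (simp add: \<Phi>_def S0)
      also have "\<dots> \<le> C1 / \<mu> + C2 * S t" using C mu by simp
      also have "\<dots> \<le> C1 / \<mu> + C2 * (real p / (1 - exp (- \<mu> * \<omega>)))"
        using mult_left_mono[OF St C(2)] by simp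
      finally show ?thesis .
    qed
    ultimately show ?thesis using vt vt0 by (simp add: d_def)
  qed
qed

end

lemma shift_tendsto:
  fixes f :: "real \<Rightarrow> 'b::metric_space"
  assumes "(f \<longlongrightarrow> l) (at (a + T) within ((\<lambda>x. x + T) ` S))"
  shows "((\<lambda>s. f (s + T)) \<longlongrightarrow> l) (at a within S)"
  unfolding Lim_within
proof (intro allI impI)
  fix e :: real assume "e > 0"
  with assms obtain d where d: "d > 0" "\<And>x. x \<in> (\<lambda>x. x + T) ` S \<Longrightarrow> 0 < dist x (a + T) \<Longrightarrow> dist x (a + T) < d \<Longrightarrow> dist (f x) l < e"
    unfolding Lim_within by blast
  show "\<exists>d>0. \<forall>x\<in>S. 0 < dist x a \<and> dist x a < d \<longrightarrow> dist (f (x + T)) l < e"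
  proof (intro exI conjI ballI impI)
    fix x assume "x \<in> S" "0 < dist x a \<and> dist x a < d"
    then show "dist (f (x + T)) l < e" using d(2)[of "x + T"] by (auto simp: dist_real_def)
  qed (use d in auto)
qed

lemma shift_left:
  fixes f :: "real \<Rightarrow> 'b::metric_space"
  assumes "continuous (at_left (a + T)) f"
  shows "continuous (at_left a) (\<lambda>s. f (s + T))"
proof -
  have "(\<lambda>x. x + T) ` {..<a} = {..<a + T}"
    by (auto simp: image_iff intro!: bexI[where x="_ - T"])
  then show ?thesis using assms unfolding continuous_within
    by (intro shift_tendsto) simp
qed

lemma shift_right:
  fixes f :: "real \<Rightarrow> 'b::metric_space"
  assumes "(f \<longlongrightarrow> l) (at_right (a + T))"
  shows "((\<lambda>s. f (s + T)) \<longlongrightarrow> l) (at_right a)"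
proof -
  have "(\<lambda>x. x + T) ` {a<..} = {a + T<..}"
    by (auto simp: image_iff intro!: bexI[where x="_ - T"])
  then show ?thesis using assms by (intro shift_tendsto) simp
qed

theorem lemma3p2:
  fixes A B :: "real^'n^'n"
    and f :: "real \<Rightarrow> real^'n \<Rightarrow> real^'n"
    and h :: "real^'n \<Rightarrow> real^'n"
    and g :: "real \<Rightarrow> real^'n"
    and \<theta> :: "int \<Rightarrow> real"
    and \<sigma> :: "int \<Rightarrow> real^'n"
    and \<zeta> :: "nat \<Rightarrow> nat"
    and \<phi> :: "real \<Rightarrow> real^'n"
    and p :: nat and \<omega> M\<sigma> Mf Mh Lf Lh N lam :: real
  assumes \<omega>_pos: "\<omega> > 0"
    and f_cont: "continuous_on UNIV (\<lambda>(t, x). f t x)"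
    and h_cont: "continuous_on UNIV h"
    and f_per: "\<forall>t x. f (t + \<omega>) x = f t x"
    and \<theta>_mono: "strict_mono \<theta>"
    and \<theta>_per: "\<forall>k. \<theta> (k + int p) = \<theta> k + \<omega>"
    and M\<sigma>: "M\<sigma> > 0" "\<forall>k. norm (\<sigma> k) \<le> M\<sigma>"
    and g_def: "\<forall>k t. \<theta> (k * int p) < t \<and> t \<le> \<theta> ((k + 1) * int p) \<longrightarrow> g t = \<sigma> k"
    and A1: "A ** B = B ** A" "det (mat 1 + B) \<noteq> 0"
    and A2: "\<exists>L. mexp L = cmat (mat 1 + B) \<and> L ** cmat A = cmat A ** L \<and>
               (\<forall>\<mu>. is_eigenvalue (cmat A + (of_real (real p / \<omega>)) *s L) \<mu> \<longrightarrow> Re \<mu> < 0)"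
    and A3: "Mf > 0" "Mh > 0" "\<forall>t x. norm (f t x) \<le> Mf" "\<forall>x. norm (h x) \<le> Mh"
    and A4: "Lf > 0" "Lh > 0"
            "\<forall>t x1 x2. norm (f t x1 - f t x2) \<le> Lf * norm (x1 - x2)"
            "\<forall>x1 x2. norm (h x1 - h x2) \<le> Lh * norm (x1 - x2)"
    and Nlam: "N > 0" "lam > 0"
            "\<forall>t s. s \<le> t \<longrightarrow> mnorm (matriciant A B \<theta> t s) \<le> N * exp (- lam * (t - s))"
    and A5: "N * (Lf / lam + real p * Lh / (1 - exp (- lam * \<omega>))) < 1"
    and A6: "N * Lf + (real p / \<omega>) * ln (1 + N * Lh) < lam"
    and \<zeta>_pos: "\<forall>n. \<zeta> n > 0"
    and \<zeta>_lim: "filterlim \<zeta> at_top sequentially"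
    and \<sigma>_rec: "\<forall>a b. \<forall>\<epsilon>>0. \<forall>\<^sub>F n in sequentially.
                   \<forall>k\<in>{a..b}. norm (\<sigma> (k + int (\<zeta> n)) - \<sigma> k) < \<epsilon>"
    and \<phi>_sol: "impulsive_solution A B f g h \<theta> \<phi>"
    and \<phi>_bdd: "bounded (range \<phi>)"
  shows "\<forall>K. compact K \<longrightarrow>
           uniform_limit K (\<lambda>n t. \<phi> (t + \<omega> * real (\<zeta> n)) - \<phi> t) (\<lambda>t. 0) sequentially"

proof -
  interpret th: thetas \<theta> p \<omega> by unfold_locales (use \<theta>_mono \<theta>_per \<omega>_pos in auto)
  have p_pos: "p > 0" by (rule th.p_pos)
  define idx where "idx s = \<lceil>(s - \<theta> 0) / \<omega>\<rceil> - 1" for s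
  have th_mul: "\<theta> (k * int p) = \<theta> 0 + of_int k * \<omega>" for k
    using th.shift_int[of 0 k] by simp
  have idx_br: "\<theta> (idx s * int p) < s \<and> s \<le> \<theta> ((idx s + 1) * int p)" for s
  proof -
    define c where "c = \<lceil>(s - \<theta> 0) / \<omega>\<rceil>"
    have c1: "of_int c - 1 < (s - \<theta> 0) / \<omega>" "(s - \<theta> 0) / \<omega> \<le> of_int c"
      unfolding c_def by linarith+
    have "(of_int c - 1) * \<omega> < s - \<theta> 0" using c1(1) \<omega>_pos by (simp add: field_simps)
    moreover have "s - \<theta> 0 \<le> of_int c * \<omega>" using c1(2) \<omega>_pos by (simp add: field_simps)
    moreover have "idx s = c - 1" by (simp add: idx_def c_def)
    moreover have "\<theta> ((c - 1) * int p) = \<theta> 0 + (of_int c - 1) * \<omega>" using th_mul[of "c - 1"] by simp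
    moreover have "\<theta> (c * int p) = \<theta> 0 + of_int c * \<omega>" using th_mul[of c] by simp
    ultimately show ?thesis by simp
  qed
  have g_idx: "g s = \<sigma> (idx s)" for s using g_def idx_br[of s] by blast
  have g_shift: "g (s + \<omega> * real m) = \<sigma> (idx s + int m)" for s m
  proof -
    have e: "\<theta> ((k + int m) * int p) = \<theta> (k * int p) + real m * \<omega>" for k
      using th.shift_nat[of "k * int p" m] by (simp add: algebra_simps)
    have "\<theta> ((idx s + int m) * int p) < s + \<omega> * real m \<and> s + \<omega> * real m \<le> \<theta> ((idx s + int m + 1) * int p)"
      using idx_br[of s] e[of "idx s"] e[of "idx s + 1"] by (simp add: algebra_simps)
    then show ?thesis using g_def by blast
  qed
  have g_bd: "norm (g s) \<le> M\<sigma>" for s using g_idx M\<sigma>(2) by simp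
  have f_shift: "f (s + \<omega> * real m) x = f s x" for s x m
  proof (induction m)
    case (Suc m)
    have "f (s + \<omega> * real (Suc m)) x = f ((s + \<omega> * real m) + \<omega>) x" by (simp add: algebra_simps)
    also have "\<dots> = f (s + \<omega> * real m) x" using f_per by blast
    finally show ?case using Suc by simp
  qed simp
  obtain M\<phi> where M\<phi>: "\<And>s. norm (\<phi> s) \<le> M\<phi>" "M\<phi> \<ge> 0"
    using \<phi>_bdd unfolding bounded_iff by (metis norm_ge_zero order_trans rangeI)
  have sol: "\<And>s. s \<notin> range \<theta> \<Longrightarrow> (\<phi> has_vector_derivative (A *v \<phi> s + f s (\<phi> s) + g s)) (at s)"
    "\<And>k. continuous (at_left (\<theta> k)) \<phi>"
    "\<And>k. (\<phi> \<longlongrightarrow> \<phi> (\<theta> k) + B *v \<phi> (\<theta> k) + h (\<phi> (\<theta> k))) (at_right (\<theta> k))"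
    using \<phi>_sol unfolding impulsive_solution_def by auto
  define qf where "qf x = N * (Lf / x + real p * Lh / (1 - exp (- x * \<omega>)))" for x
  have "isCont qf lam"
  proof -
    have "exp (- lam * \<omega>) < 1" using Nlam(2) \<omega>_pos by simp
    then show ?thesis unfolding qf_def using Nlam(2)
      by (intro continuous_intros) auto
  qed
  then have "(qf \<longlongrightarrow> qf lam) (at lam)" by (simp add: isCont_def)
  moreover have "qf lam < 1" using A5 by (simp add: qf_def)
  ultimately have "eventually (\<lambda>x. qf x < 1) (at lam)" by (rule order_tendstoD(2))
  then have "eventually (\<lambda>x. qf x < 1) (at_left lam)" by (rule filter_leD[OF at_le, rotated]) simp
  moreover have "eventually (\<lambda>x. x \<in> {0<..<lam}) (at_left lam)" by (rule eventually_at_left_real) (use Nlam in simp)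
  ultimately have "eventually (\<lambda>x. qf x < 1 \<and> x \<in> {0<..<lam}) (at_left lam)" by eventually_elim auto
  then obtain \<mu> where \<mu>: "qf \<mu> < 1" "0 < \<mu>" "\<mu> < lam"
    using eventually_happens'[of "at_left lam"] by auto
  define \<gamma> where "\<gamma> = lam - \<mu>"
  have \<gamma>: "\<gamma> > 0" using \<mu> by (simp add: \<gamma>_def)
  define q where "q = qf \<mu>"
  have q: "q < 1" "0 \<le> q"
  proof -
    show "q < 1" using \<mu> by (simp add: q_def)
    have "exp (- \<mu> * \<omega>) < 1" using \<mu> \<omega>_pos by simp
    then show "0 \<le> q" unfolding q_def qf_def using Nlam A4 \<mu>
      by (intro mult_nonneg_nonneg add_nonneg_nonneg divide_nonneg_nonneg) auto
  qed
  define G where "G n s = norm (g (s + \<omega> * real (\<zeta> n)) - g s)" for n s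
  define \<Gamma> where "\<Gamma> n = (SUP s. G n s * exp (- \<gamma> * \<bar>s\<bar>))" for n
  have G_bd: "G n s \<le> 2 * M\<sigma>" for n s
    unfolding G_def using norm_triangle_ineq4[of "g (s + \<omega> * real (\<zeta> n))" "g s"] g_bd[of s] g_bd[of "s + \<omega> * real (\<zeta> n)"] by simp
  have ew: "exp (- \<gamma> * \<bar>s\<bar>) \<le> 1" for s using \<gamma> by simp
  have Gw_bd: "G n s * exp (- \<gamma> * \<bar>s\<bar>) \<le> 2 * M\<sigma>" for n s
  proof -
    have "G n s * exp (- \<gamma> * \<bar>s\<bar>) \<le> G n s * 1" using ew[of s] by (intro mult_left_mono) (auto simp: G_def)
    then show ?thesis using G_bd[of n s] by simp
  qed
  have \<Gamma>_bdd: "bdd_above (range (\<lambda>s. G n s * exp (- \<gamma> * \<bar>s\<bar>)))" for n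
    using Gw_bd by (intro bdd_aboveI2) auto
  have \<Gamma>_nn: "0 \<le> \<Gamma> n" for n
  proof -
    have "G n 0 * exp (- \<gamma> * \<bar>0\<bar>) \<le> \<Gamma> n" unfolding \<Gamma>_def by (rule cSUP_upper[OF _ \<Gamma>_bdd]) simp
    moreover have "0 \<le> G n 0" by (simp add: G_def)
    ultimately show ?thesis by simp
  qed
  have expineq: "exp (- lam * (t - s)) * exp (\<gamma> * \<bar>s\<bar>) \<le> exp (\<gamma> * \<bar>t\<bar>) * exp (- \<mu> * (t - s))"
    if "s \<le> t" for s t
  proof -
    have "\<gamma> * \<bar>s\<bar> \<le> \<gamma> * (\<bar>t\<bar> + (t - s))" using \<gamma> that by (intro mult_left_mono) auto
    then have "- lam * (t - s) + \<gamma> * \<bar>s\<bar> \<le> \<gamma> * \<bar>t\<bar> + - \<mu> * (t - s)"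
      by (simp add: \<gamma>_def algebra_simps)
    then show ?thesis by (simp add: exp_add[symmetric])
  qed
  have main: "norm (\<phi> (t + \<omega> * real (\<zeta> n)) - \<phi> t) \<le> exp (\<gamma> * \<bar>t\<bar>) * (N * \<Gamma> n / (\<mu> * (1 - q)))" for n t
  proof -
    define m where "m = \<zeta> n"
    define T where "T = \<omega> * real m"
    define w where "w s = \<phi> (s + T) - \<phi> s" for s
    define F where "F s = (f s (\<phi> (s + T)) - f s (\<phi> s)) + (g (s + T) - g s)" for s
    define H where "H k = h (\<phi> (\<theta> k + T)) - h (\<phi> (\<theta> k))" for k
    have thT: "\<theta> k + T = \<theta> (k + int m * int p)" for k
      using th.shift_nat[of k m] by (simp add: T_def algebra_simps)
    have notr: "s + T \<notin> range \<theta>" if "s \<notin> range \<theta>" for s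
    proof
      assume "s + T \<in> range \<theta>" then obtain j where j: "s + T = \<theta> j" by auto
      have "\<theta> (j + (- int m) * int p) = \<theta> j - real m * \<omega>" using th.shift_int[of j "- int m"] by simp
      then have "s = \<theta> (j + (- int m) * int p)" using j by (simp add: T_def algebra_simps)
      then show False using that by auto
    qed
    have W1: "(w has_vector_derivative A *v w s + F s) (at s)" if s: "s \<notin> range \<theta>" for s
    proof -
      have d1: "((\<lambda>s. s + T) has_vector_derivative 1) (at s)"
        unfolding has_real_derivative_iff_has_vector_derivative[symmetric]
        by (auto intro!: derivative_eq_intros)
      have "((\<phi> \<circ> (\<lambda>s. s + T)) has_vector_derivative 1 *\<^sub>R (A *v \<phi> (s + T) + f (s + T) (\<phi> (s + T)) + g (s + T))) (at s)"
        by (rule vector_diff_chain_at[OF d1]) (use sol(1)[OF notr[OF s]] in simp)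
      then have d\<psi>: "((\<lambda>s. \<phi> (s + T)) has_vector_derivative A *v \<phi> (s + T) + f s (\<phi> (s + T)) + g (s + T)) (at s)"
        using f_shift[of s m] by (simp add: o_def T_def)
      have "(w has_vector_derivative (A *v \<phi> (s + T) + f s (\<phi> (s + T)) + g (s + T)) - (A *v \<phi> s + f s (\<phi> s) + g s)) (at s)"
        unfolding w_def by (rule has_vector_derivative_diff[OF d\<psi> sol(1)[OF s]])
      moreover have "(A *v \<phi> (s + T) + f s (\<phi> (s + T)) + g (s + T)) - (A *v \<phi> s + f s (\<phi> s) + g s) = A *v w s + F s"
        by (simp add: w_def F_def matrix_vector_mult_diff_distrib algebra_simps)
      ultimately show ?thesis by simp
    qed
    have W2l: "continuous (at_left (\<theta> k)) w" for k
    proof -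
      have "continuous (at_left (\<theta> k)) (\<lambda>s. \<phi> (s + T))"
        by (rule shift_left) (use sol(2)[of "k + int m * int p"] thT in simp)
      then show ?thesis unfolding w_def by (intro continuous_intros sol(2))
    qed
    have W2r: "(w \<longlongrightarrow> w (\<theta> k) + B *v w (\<theta> k) + H k) (at_right (\<theta> k))" for k
    proof -
      have "((\<lambda>s. \<phi> (s + T)) \<longlongrightarrow> \<phi> (\<theta> k + T) + B *v \<phi> (\<theta> k + T) + h (\<phi> (\<theta> k + T))) (at_right (\<theta> k))"
        by (rule shift_right) (use sol(3)[of "k + int m * int p"] thT in simp)
      then have "(w \<longlongrightarrow> (\<phi> (\<theta> k + T) + B *v \<phi> (\<theta> k + T) + h (\<phi> (\<theta> k + T))) - (\<phi> (\<theta> k) + B *v \<phi> (\<theta> k) + h (\<phi> (\<theta> k)))) (at_right (\<theta> k))"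
        unfolding w_def by (intro tendsto_diff sol(3))
      moreover have "(\<phi> (\<theta> k + T) + B *v \<phi> (\<theta> k + T) + h (\<phi> (\<theta> k + T))) - (\<phi> (\<theta> k) + B *v \<phi> (\<theta> k) + h (\<phi> (\<theta> k))) = w (\<theta> k) + B *v w (\<theta> k) + H k"
        by (simp add: w_def H_def matrix_vector_mult_diff_distrib algebra_simps)
      ultimately show ?thesis by simp
    qed
    have wbd: "norm (w s) \<le> 2 * M\<phi>" for s
      unfolding w_def using norm_triangle_ineq4[of "\<phi> (s + T)" "\<phi> s"] M\<phi>(1)[of s] M\<phi>(1)[of "s + T"] by simp
    define Sn where "Sn = (SUP s. norm (w s) * exp (- \<gamma> * \<bar>s\<bar>))"
    have Sbdd: "bdd_above (range (\<lambda>s. norm (w s) * exp (- \<gamma> * \<bar>s\<bar>)))"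
    proof (rule bdd_aboveI2)
      fix s
      have "norm (w s) * exp (- \<gamma> * \<bar>s\<bar>) \<le> norm (w s) * 1" using ew[of s] by (intro mult_left_mono) auto
      then show "norm (w s) * exp (- \<gamma> * \<bar>s\<bar>) \<le> 2 * M\<phi>" using wbd[of s] by simp
    qed
    have wS: "norm (w s) \<le> Sn * exp (\<gamma> * \<bar>s\<bar>)" for s
    proof -
      have "norm (w s) * exp (- \<gamma> * \<bar>s\<bar>) \<le> Sn" unfolding Sn_def by (rule cSUP_upper[OF _ Sbdd]) simp
      then have "norm (w s) * exp (- \<gamma> * \<bar>s\<bar>) * exp (\<gamma> * \<bar>s\<bar>) \<le> Sn * exp (\<gamma> * \<bar>s\<bar>)"
        by (rule mult_right_mono) simp
      then show ?thesis by (simp add: mult.assoc exp_add[symmetric])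
    qed
    have Sn_nn: "0 \<le> Sn"
    proof -
      have "norm (w 0) * exp (- \<gamma> * \<bar>0\<bar>) \<le> Sn" unfolding Sn_def by (rule cSUP_upper[OF _ Sbdd]) simp
      then have "norm (w 0) \<le> Sn" by simp
      then show ?thesis using norm_ge_zero[of "w 0"] by linarith
    qed
    have GS: "G n s \<le> \<Gamma> n * exp (\<gamma> * \<bar>s\<bar>)" for s
    proof -
      have "G n s * exp (- \<gamma> * \<bar>s\<bar>) \<le> \<Gamma> n" unfolding \<Gamma>_def by (rule cSUP_upper[OF _ \<Gamma>_bdd]) simp
      then have "G n s * exp (- \<gamma> * \<bar>s\<bar>) * exp (\<gamma> * \<bar>s\<bar>) \<le> \<Gamma> n * exp (\<gamma> * \<bar>s\<bar>)"
        by (rule mult_right_mono) simp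
      then show ?thesis by (simp add: mult.assoc exp_add[symmetric])
    qed
    have GT: "G n s = norm (g (s + T) - g s)" for s by (simp add: G_def T_def m_def)
    have pt: "norm (w t) \<le> exp (\<gamma> * \<bar>t\<bar>) * (q * Sn + N * \<Gamma> n / \<mu>)" for t
    proof -
      define C1 where "C1 = N * (Lf * Sn + \<Gamma> n) * exp (\<gamma> * \<bar>t\<bar>)"
      define C2 where "C2 = N * Lh * Sn * exp (\<gamma> * \<bar>t\<bar>)"
      have C1: "C1 \<ge> 0" using Nlam A4 Sn_nn \<Gamma>_nn[of n] by (simp add: C1_def)
      have C2: "C2 \<ge> 0" using Nlam A4 Sn_nn by (simp add: C2_def)
      have FB: "N * exp (- lam * (t - s)) * norm (F s) \<le> C1 * exp (- \<mu> * (t - s))" if "s \<le> t" for s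
      proof -
        have "norm (F s) \<le> norm (f s (\<phi> (s + T)) - f s (\<phi> s)) + norm (g (s + T) - g s)"
          unfolding F_def by (rule norm_triangle_ineq)
        also have "\<dots> \<le> Lf * norm (w s) + G n s" using A4(3) by (simp add: w_def GT)
        also have "\<dots> \<le> Lf * (Sn * exp (\<gamma> * \<bar>s\<bar>)) + \<Gamma> n * exp (\<gamma> * \<bar>s\<bar>)"
          using wS[of s] GS[of s] A4(1) by (intro add_mono mult_left_mono) auto
        finally have nF: "norm (F s) \<le> (Lf * Sn + \<Gamma> n) * exp (\<gamma> * \<bar>s\<bar>)" by (simp add: algebra_simps)
        have "N * exp (- lam * (t - s)) * norm (F s) \<le> N * exp (- lam * (t - s)) * ((Lf * Sn + \<Gamma> n) * exp (\<gamma> * \<bar>s\<bar>))"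
          using nF Nlam by (intro mult_left_mono) auto
        also have "\<dots> = N * (Lf * Sn + \<Gamma> n) * (exp (- lam * (t - s)) * exp (\<gamma> * \<bar>s\<bar>))" by (simp add: algebra_simps)
        also have "\<dots> \<le> N * (Lf * Sn + \<Gamma> n) * (exp (\<gamma> * \<bar>t\<bar>) * exp (- \<mu> * (t - s)))"
        proof -
          have "0 \<le> N * (Lf * Sn + \<Gamma> n)" using Nlam(1) A4(1) Sn_nn \<Gamma>_nn[of n]
            by (intro mult_nonneg_nonneg add_nonneg_nonneg) auto
          then show ?thesis by (rule mult_left_mono[OF expineq[OF that]])
        qed
        also have "\<dots> = C1 * exp (- \<mu> * (t - s))" by (simp add: C1_def algebra_simps)
        finally show ?thesis .
      qed
      have HB: "N * exp (- lam * (t - \<theta> k)) * norm (H k) \<le> C2 * exp (- \<mu> * (t - \<theta> k))" if "\<theta> k < t" for k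
      proof -
        have "norm (H k) \<le> Lh * norm (w (\<theta> k))" using A4(4) by (simp add: H_def w_def)
        also have "\<dots> \<le> Lh * (Sn * exp (\<gamma> * \<bar>\<theta> k\<bar>))" using wS A4(2) by (intro mult_left_mono) auto
        finally have nH: "norm (H k) \<le> Lh * Sn * exp (\<gamma> * \<bar>\<theta> k\<bar>)" by (simp add: algebra_simps)
        have "N * exp (- lam * (t - \<theta> k)) * norm (H k) \<le> N * exp (- lam * (t - \<theta> k)) * (Lh * Sn * exp (\<gamma> * \<bar>\<theta> k\<bar>))"
          using nH Nlam by (intro mult_left_mono) auto
        also have "\<dots> = N * Lh * Sn * (exp (- lam * (t - \<theta> k)) * exp (\<gamma> * \<bar>\<theta> k\<bar>))" by (simp add: algebra_simps)
        also have "\<dots> \<le> N * Lh * Sn * (exp (\<gamma> * \<bar>t\<bar>) * exp (- \<mu> * (t - \<theta> k)))"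
        proof -
          have "0 \<le> N * Lh * Sn" using Nlam(1) A4(2) Sn_nn by simp
          then show ?thesis using expineq[of "\<theta> k" t] that by (intro mult_left_mono) auto
        qed
        also have "\<dots> = C2 * exp (- \<mu> * (t - \<theta> k))" by (simp add: C2_def algebra_simps)
        finally show ?thesis .
      qed
      have eqC: "C1 / \<mu> + C2 * (real p / (1 - exp (- \<mu> * \<omega>))) = exp (\<gamma> * \<bar>t\<bar>) * (q * Sn + N * \<Gamma> n / \<mu>)"
      proof -
        have "exp (- \<mu> * \<omega>) < 1" using \<mu> \<omega>_pos by simp
        then have ne: "1 - exp (- \<mu> * \<omega>) \<noteq> 0" by linarith
        have m0: "\<mu> \<noteq> 0" using \<mu> by simp
        show ?thesis using ne m0 unfolding C1_def C2_def q_def qf_def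
          by (simp add: field_simps)
      qed
      have keyb0: "norm (w t - matriciant A B \<theta> t t0 *v w t0) \<le> C1 / \<mu> + C2 * (real p / (1 - exp (- \<mu> * \<omega>)))"
        if "t0 \<le> t" for t0
      proof (rule th.key[OF A1(1) W1 W2l W2r])
        show "\<And>s. s \<le> t \<Longrightarrow> mnorm (matriciant A B \<theta> t s) \<le> N * exp (- lam * (t - s))" using Nlam(3) by auto
        show "\<And>s. s \<le> t \<Longrightarrow> s \<notin> range \<theta> \<Longrightarrow> N * exp (- lam * (t - s)) * norm (F s) \<le> C1 * exp (- \<mu> * (t - s))"
          using FB by auto
        show "\<And>k. \<theta> k < t \<Longrightarrow> N * exp (- lam * (t - \<theta> k)) * norm (H k) \<le> C2 * exp (- \<mu> * (t - \<theta> k))"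
          using HB by auto
      qed (use \<mu>(2) C1 C2 that in auto)
      have keyb: "norm (w t - matriciant A B \<theta> t t0 *v w t0) \<le> exp (\<gamma> * \<bar>t\<bar>) * (q * Sn + N * \<Gamma> n / \<mu>)"
        if "t0 \<le> t" for t0
        using keyb0[OF that] eqC by simp
      have U0: "norm (matriciant A B \<theta> t t0 *v w t0) \<le> N * exp (- lam * (t - t0)) * (2 * M\<phi>)" if "t0 \<le> t" for t0
      proof -
        have "norm (matriciant A B \<theta> t t0 *v w t0) \<le> mnorm (matriciant A B \<theta> t t0) * norm (w t0)" by (rule mv_norm_le)
        also have "\<dots> \<le> N * exp (- lam * (t - t0)) * norm (w t0)"
          using Nlam(3) that by (intro mult_right_mono) auto
        also have "\<dots> \<le> N * exp (- lam * (t - t0)) * (2 * M\<phi>)"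
          using wbd Nlam by (intro mult_left_mono) auto
        finally show ?thesis .
      qed
      show ?thesis
      proof (rule field_le_epsilon)
        fix e :: real assume e: "0 < e"
        define K where "K = N * (2 * M\<phi>) + 1"
        have "0 \<le> N * (2 * M\<phi>)" using Nlam(1) M\<phi>(2) by simp
        then have K: "K > 0" unfolding K_def by linarith
        define R where "R = max 0 (ln (K / e) / lam)"
        have "lam * R \<ge> ln (K / e)" using Nlam by (simp add: R_def field_simps max_def)
        then have "exp (- lam * R) \<le> exp (- ln (K / e))" by simp
        also have "\<dots> = e / K" using e K by (simp add: exp_minus)
        finally have eR: "exp (- lam * R) \<le> e / K" .
        have R0: "R \<ge> 0" by (simp add: R_def)
        have "N * exp (- lam * (t - (t - R))) * (2 * M\<phi>) = (K - 1) * exp (- lam * R)" by (simp add: K_def algebra_simps)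
        also have "\<dots> \<le> (K - 1) * (e / K)" using eR K Nlam M\<phi> by (intro mult_left_mono) (auto simp: K_def)
        also have "\<dots> \<le> e" using K e by (simp add: field_simps)
        finally have small: "N * exp (- lam * (t - (t - R))) * (2 * M\<phi>) \<le> e" .
        have "norm (w t) \<le> norm (w t - matriciant A B \<theta> t (t - R) *v w (t - R)) + norm (matriciant A B \<theta> t (t - R) *v w (t - R))"
          using norm_triangle_ineq[of "w t - matriciant A B \<theta> t (t - R) *v w (t - R)" "matriciant A B \<theta> t (t - R) *v w (t - R)"] by simp
        also have "\<dots> \<le> exp (\<gamma> * \<bar>t\<bar>) * (q * Sn + N * \<Gamma> n / \<mu>) + e"
          using keyb[of "t - R"] U0[of "t - R"] small R0 by simp
        finally show "norm (w t) \<le> exp (\<gamma> * \<bar>t\<bar>) * (q * Sn + N * \<Gamma> n / \<mu>) + e" .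
      qed
    qed
    have "Sn \<le> q * Sn + N * \<Gamma> n / \<mu>"
      unfolding Sn_def[of]
    proof (rule cSUP_least)
      fix s
      have "norm (w s) * exp (- \<gamma> * \<bar>s\<bar>) \<le> exp (\<gamma> * \<bar>s\<bar>) * (q * Sn + N * \<Gamma> n / \<mu>) * exp (- \<gamma> * \<bar>s\<bar>)"
        using pt[of s] by (rule mult_right_mono) simp
      also have "\<dots> = q * Sn + N * \<Gamma> n / \<mu>" by (simp add: exp_minus field_simps)
      finally show "norm (w s) * exp (- \<gamma> * \<bar>s\<bar>) \<le> q * (SUP s. norm (w s) * exp (- \<gamma> * \<bar>s\<bar>)) + N * \<Gamma> n / \<mu>"
        by (simp add: Sn_def)
    qed simp
    then have "(1 - q) * Sn \<le> N * \<Gamma> n / \<mu>" by (simp add: algebra_simps)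
    then have Sn_le: "Sn \<le> N * \<Gamma> n / (\<mu> * (1 - q))" using q \<mu> by (simp add: field_simps)
    have "norm (w t) \<le> Sn * exp (\<gamma> * \<bar>t\<bar>)" by (rule wS)
    also have "\<dots> \<le> N * \<Gamma> n / (\<mu> * (1 - q)) * exp (\<gamma> * \<bar>t\<bar>)" using Sn_le by (rule mult_right_mono) simp
    finally show ?thesis by (simp add: w_def T_def m_def mult.commute)
  qed
  have idx_mono: "idx s1 \<le> idx s2" if "s1 \<le> s2" for s1 s2
  proof -
    have "(s1 - \<theta> 0) / \<omega> \<le> (s2 - \<theta> 0) / \<omega>" using that \<omega>_pos by (simp add: divide_right_mono)
    then have "\<lceil>(s1 - \<theta> 0) / \<omega>\<rceil> \<le> \<lceil>(s2 - \<theta> 0) / \<omega>\<rceil>" by (rule ceiling_mono)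
    then show ?thesis unfolding idx_def by simp
  qed
  have \<Gamma>_lim: "eventually (\<lambda>n. \<Gamma> n \<le> \<epsilon>) sequentially" if eps: "\<epsilon> > 0" for \<epsilon>
  proof -
    define R where "R = max 0 (ln (2 * M\<sigma> / \<epsilon>) / \<gamma>)"
    have R0: "R \<ge> 0" by (simp add: R_def)
    have "\<gamma> * R \<ge> ln (2 * M\<sigma> / \<epsilon>)"
      using \<gamma> by (simp add: R_def field_simps max_def)
    then have "exp (- \<gamma> * R) \<le> exp (- ln (2 * M\<sigma> / \<epsilon>))" by simp
    also have "\<dots> = \<epsilon> / (2 * M\<sigma>)" using eps M\<sigma>(1) by (simp add: exp_minus)
    finally have "2 * M\<sigma> * exp (- \<gamma> * R) \<le> \<epsilon>" using M\<sigma>(1) by (simp add: field_simps)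
    note Rb = this
    define a where "a = idx (- R)"
    define b where "b = idx R"
    have "\<forall>\<^sub>F n in sequentially. \<forall>k\<in>{a..b}. norm (\<sigma> (k + int (\<zeta> n)) - \<sigma> k) < \<epsilon>"
      using \<sigma>_rec eps by blast
    then show ?thesis
    proof eventually_elim
      case (elim n)
      show "\<Gamma> n \<le> \<epsilon>" unfolding \<Gamma>_def
      proof (rule cSUP_least)
        fix s :: real
        show "G n s * exp (- \<gamma> * \<bar>s\<bar>) \<le> \<epsilon>"
        proof (cases "\<bar>s\<bar> \<le> R")
          case True
          then have "idx s \<in> {a..b}" unfolding a_def b_def by (auto intro!: idx_mono)
          then have "G n s < \<epsilon>" using elim g_shift[of s "\<zeta> n"] g_idx[of s] by (simp add: G_def)
          moreover have "G n s * exp (- \<gamma> * \<bar>s\<bar>) \<le> G n s * 1" using ew[of s] by (intro mult_left_mono) (auto simp: G_def)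
          ultimately show ?thesis by simp
        next
          case False
          have "G n s * exp (- \<gamma> * \<bar>s\<bar>) \<le> 2 * M\<sigma> * exp (- \<gamma> * R)"
          proof (rule mult_mono)
            show "exp (- \<gamma> * \<bar>s\<bar>) \<le> exp (- \<gamma> * R)" using False \<gamma> by simp
          qed (use G_bd M\<sigma>(1) in \<open>auto simp: G_def\<close>)
          then show ?thesis using Rb by simp
        qed
      qed simp
    qed
  qed
  show ?thesis
  proof (intro allI impI)
    fix K :: "real set" assume "compact K"
    then obtain R where R: "\<And>t. t \<in> K \<Longrightarrow> norm t \<le> R" using compact_imp_bounded bounded_iff by metis
    define C0 where "C0 = exp (\<gamma> * R) * (N / (\<mu> * (1 - q)))"
    have C0: "0 \<le> C0" using q \<mu> Nlam by (simp add: C0_def)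
    have bnd: "norm (\<phi> (t + \<omega> * real (\<zeta> n)) - \<phi> t) \<le> C0 * \<Gamma> n" if "t \<in> K" for t n
    proof -
      have "exp (\<gamma> * \<bar>t\<bar>) \<le> exp (\<gamma> * R)" using R[OF that] \<gamma> by simp
      then have "exp (\<gamma> * \<bar>t\<bar>) * (N * \<Gamma> n / (\<mu> * (1 - q))) \<le> exp (\<gamma> * R) * (N * \<Gamma> n / (\<mu> * (1 - q)))"
        using q \<mu> Nlam \<Gamma>_nn[of n] by (intro mult_right_mono) auto
      then show ?thesis using main[of t n] by (simp add: C0_def)
    qed
    show "uniform_limit K (\<lambda>n t. \<phi> (t + \<omega> * real (\<zeta> n)) - \<phi> t) (\<lambda>t. 0) sequentially"
      unfolding uniform_limit_iff
    proof (intro allI impI)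
      fix e :: real assume e: "0 < e"
      have "eventually (\<lambda>n. \<Gamma> n \<le> e / (C0 + 1)) sequentially"
        by (rule \<Gamma>_lim) (use e C0 in simp)
      then show "\<forall>\<^sub>F n in sequentially. \<forall>t\<in>K. dist (\<phi> (t + \<omega> * real (\<zeta> n)) - \<phi> t) 0 < e"
      proof eventually_elim
        case (elim n)
        show ?case
        proof
          fix t assume "t \<in> K"
          have "C0 * \<Gamma> n \<le> C0 * (e / (C0 + 1))" using elim C0 by (intro mult_left_mono) auto
          also have "\<dots> < e" using C0 e by (simp add: field_simps)
          finally show "dist (\<phi> (t + \<omega> * real (\<zeta> n)) - \<phi> t) 0 < e"
            using bnd[OF \<open>t \<in> K\<close>, of n] by simp
        qed
      qed
    qed
  qed
qed

end
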